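(* Let $m\ge1$, $\Sigma=\{1,\ldots,m\}$, and let $\mu:\Sigma^*\to\Sigma^*$ be a morphism with $\mu(1)=1x$ for some $x\in\Sigma^+$, $|\mu(a)|>1$ for all $a\in\Sigma$, and frequency matrix $M$ non-singular with $|M^{-1}|<1$. Let $N=\max_{a\in\Sigma}|\mu(a)|$, let $k$ be a positive integer, and let $t_1=[a_1,\ldots,a_{k+1},d_1,\ldots,d_{k-1}]$ be a $k$-template with $\Delta=\lfloor\max_i|d_i|\rfloor$ (Euclidean norm). Suppose that $\mathcal I$ is a factor of $\mu^\omega(1)$ which is an instance of $t_1$ and $|\mathcal I|>N+k-1+(k-1)[N-2+mk\Delta]$. Then for some parent $t_2$ of $t_1$, $\mu^\omega(1)$ contains a factor $\mathcal J$ which is an instance of $t_2$ and satisfies $|\mathcal J|<|\mathcal I|$.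
   Context: $\mu^\omega(1)$ denotes the infinite fixed point of $\mu$ beginning with $1$ (the limit of $\mu^n(1)$). The Parikh map $\psi:\Sigma^*\to\mathbb{Z}^m$ is $\psi(w)=[|w|_1,\ldots,|w|_m]$ (row vector). The frequency matrix $M$ of $\mu$ has $M_{i,j}=|\mu(i)|_j$. For a real matrix $A$, $|A|=\sup_{v\neq0}|vA|/|v|$ with Euclidean norm on row vectors. A $k$-template is a $2k$-tuple $t=[a_1,\ldots,a_{k+1},d_1,\ldots,d_{k-1}]$ with each $a_i\in\{\epsilon,1,\ldots,m\}$ ($\epsilon$ the empty word) and each $d_i\in\mathbb{Z}^m$. A non-empty word $\mathcal I$ is an instance of $t$ if $\mathcal I=a_1X_1a_2X_2\cdots a_kX_ka_{k+1}$ for words $X_i$ with $\psi(X_{i+1})-\psi(X_i)=d_i$ for $i=1,\ldots,k-1$. Given $k$-templates $t_1=[a_1,\ldots,a_{k+1},d_1,\ldots,d_{k-1}]$ and $t_2=[A_1,\ldots,A_{k+1},D_1,\ldots,D_{k-1}]$, $t_2$ is a parent of $t_1$ if there are words $a_i',a_i''$ ($1\le i\le k+1$) with $\mu(A_i)=a_i'a_ia_i''$ for each $i$ and $\psi(a_{i+1}''a_{i+2}')-\psi(a_i''a_{i+1}')+D_iM=d_i$ for $1\le i\le k-1$. *)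

theory Defs
  imports Complex_Main
begin

text \<open>Alphabet \<Sigma> = {1..m} (letters are naturals), words are nat lists,
  vectors in Z^m / R^m are functions on the index set {1..m},
  m x m matrices are functions nat \<Rightarrow> nat \<Rightarrow> _ on {1..m} x {1..m}.\<close>

definition morph :: "(nat \<Rightarrow> nat list) \<Rightarrow> nat list \<Rightarrow> nat list" where
  "morph \<mu> w = concat (map \<mu> w)"

definition fixpoint_word :: "(nat \<Rightarrow> nat list) \<Rightarrow> nat \<Rightarrow> nat" where
  "fixpoint_word \<mu> = (THE w. \<forall>n. \<forall>i < length ((morph \<mu> ^^ n) [1]). w i = ((morph \<mu> ^^ n) [1]) ! i)"

definition is_factor :: "nat list \<Rightarrow> (nat \<Rightarrow> nat) \<Rightarrow> bool" where
  "is_factor u w \<longleftrightarrow> (\<exists>i. u = map w [i..<i + length u])"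

definition psi :: "nat list \<Rightarrow> nat \<Rightarrow> int" where
  "psi w j = int (count_list w j)"

definition freq_mat :: "(nat \<Rightarrow> nat list) \<Rightarrow> nat \<Rightarrow> nat \<Rightarrow> int" where
  "freq_mat \<mu> i j = int (count_list (\<mu> i) j)"

definition vec_mat :: "nat \<Rightarrow> (nat \<Rightarrow> 'a::comm_ring_1) \<Rightarrow> (nat \<Rightarrow> nat \<Rightarrow> 'a) \<Rightarrow> nat \<Rightarrow> 'a" where
  "vec_mat m v A j = (\<Sum>i=1..m. v i * A i j)"

definition mat_mult :: "nat \<Rightarrow> (nat \<Rightarrow> nat \<Rightarrow> 'a::comm_ring_1) \<Rightarrow> (nat \<Rightarrow> nat \<Rightarrow> 'a) \<Rightarrow> nat \<Rightarrow> nat \<Rightarrow> 'a" where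
  "mat_mult m A B i j = (\<Sum>l=1..m. A i l * B l j)"

definition is_inverse :: "nat \<Rightarrow> (nat \<Rightarrow> nat \<Rightarrow> real) \<Rightarrow> (nat \<Rightarrow> nat \<Rightarrow> real) \<Rightarrow> bool" where
  "is_inverse m A B \<longleftrightarrow>
     (\<forall>i\<in>{1..m}. \<forall>j\<in>{1..m}. mat_mult m A B i j = (if i = j then 1 else 0)
                          \<and> mat_mult m B A i j = (if i = j then 1 else 0))"

definition enorm :: "nat \<Rightarrow> (nat \<Rightarrow> real) \<Rightarrow> real" where
  "enorm m v = sqrt (\<Sum>i=1..m. (v i)\<^sup>2)"

definition opnorm :: "nat \<Rightarrow> (nat \<Rightarrow> nat \<Rightarrow> real) \<Rightarrow> real" where
  "opnorm m A = (SUP v \<in> {v. \<exists>i\<in>{1..m}. v i \<noteq> 0}. enorm m (vec_mat m v A) / enorm m v)"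

definition is_template :: "nat \<Rightarrow> nat \<Rightarrow> (nat \<Rightarrow> nat list) \<Rightarrow> (nat \<Rightarrow> nat \<Rightarrow> int) \<Rightarrow> bool" where
  "is_template m k a d \<longleftrightarrow> (\<forall>i\<in>{1..k+1}. length (a i) \<le> 1 \<and> set (a i) \<subseteq> {1..m})"

definition is_instance :: "nat \<Rightarrow> nat \<Rightarrow> (nat \<Rightarrow> nat list) \<Rightarrow> (nat \<Rightarrow> nat \<Rightarrow> int) \<Rightarrow> nat list \<Rightarrow> bool" where
  "is_instance m k a d I \<longleftrightarrow> I \<noteq> [] \<and>
     (\<exists>X :: nat \<Rightarrow> nat list.
        (\<forall>i\<in>{1..k}. set (X i) \<subseteq> {1..m}) \<and>
        I = concat (map (\<lambda>i. a i @ X i) [1..<k+1]) @ a (k+1) \<and>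
        (\<forall>i\<in>{1..k-1}. \<forall>j\<in>{1..m}. psi (X (i+1)) j - psi (X i) j = d i j))"

text \<open>t2 = [A, D] is a parent of t1 = [a, d].\<close>
definition is_parent :: "nat \<Rightarrow> (nat \<Rightarrow> nat list) \<Rightarrow> nat \<Rightarrow> (nat \<Rightarrow> nat list) \<Rightarrow> (nat \<Rightarrow> nat \<Rightarrow> int)
     \<Rightarrow> (nat \<Rightarrow> nat list) \<Rightarrow> (nat \<Rightarrow> nat \<Rightarrow> int) \<Rightarrow> bool" where
  "is_parent m \<mu> k A D a d \<longleftrightarrow>
     (\<exists>a' a'' :: nat \<Rightarrow> nat list.
        (\<forall>i\<in>{1..k+1}. morph \<mu> (A i) = a' i @ a i @ a'' i) \<and>
        (\<forall>i\<in>{1..k-1}. \<forall>j\<in>{1..m}.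
           psi (a'' (i+1) @ a' (i+2)) j - psi (a'' i @ a' (i+1)) j
             + vec_mat m (D i) (freq_mat \<mu>) j = d i j))"

text \<open>\<Delta> = floor (max_i |d_i|); for k = 1 there are no d_i and \<Delta> is irrelevant (set to 0).\<close>
definition Delta :: "nat \<Rightarrow> nat \<Rightarrow> (nat \<Rightarrow> nat \<Rightarrow> int) \<Rightarrow> int" where
  "Delta m k d = (if k \<le> 1 then 0
     else \<lfloor>Max ((\<lambda>i. enorm m (\<lambda>j. real_of_int (d i j))) ` {1..k-1})\<rfloor>)"

end

theory Submission
  imports Defs
begin

definition uu :: "(nat \<Rightarrow> nat list) \<Rightarrow> nat \<Rightarrow> nat list" where
  "uu \<mu> n = (morph \<mu> ^^ n) [1]"

lemma morph_append[simp]: "morph \<mu> (u @ v) = morph \<mu> u @ morph \<mu> v"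
  by (simp add: morph_def)
lemma morph_Nil[simp]: "morph \<mu> [] = []" by (simp add: morph_def)
lemma morph_Cons[simp]: "morph \<mu> (c # v) = \<mu> c @ morph \<mu> v" by (simp add: morph_def)

lemma uu_Suc: "uu \<mu> (Suc n) = morph \<mu> (uu \<mu> n)"
  by (simp add: uu_def)

lemma set_morph: "set (morph \<mu> v) = (\<Union>c\<in>set v. set (\<mu> c))"
  by (induction v) auto

lemma len_morph:
  assumes "\<forall>c\<in>{1..m}. length (\<mu> c) > 1" "set v \<subseteq> {1..m}"
  shows "length (morph \<mu> v) \<ge> 2 * length v"
  using assms(2)
proof (induction v)
  case (Cons c v)
  then have "length (\<mu> c) \<ge> 2" using assms(1) by force
  with Cons show ?case by auto
qed simp

lemma psi_append[simp]: "psi (u @ v) j = psi u j + psi v j"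
  by (simp add: psi_def)

lemma psi_morph:
  assumes "set Y \<subseteq> {1..m}"
  shows "psi (morph \<mu> Y) j = vec_mat m (psi Y) (freq_mat \<mu>) j"
  using assms
proof (induction Y)
  case Nil then show ?case by (simp add: psi_def vec_mat_def)
next
  case (Cons c Y)
  then have c: "c \<in> {1..m}" and IH: "psi (morph \<mu> Y) j = vec_mat m (psi Y) (freq_mat \<mu>) j" by auto
  have "vec_mat m (psi (c # Y)) (freq_mat \<mu>) j
        = (\<Sum>i=1..m. psi Y i * freq_mat \<mu> i j + (if c = i then freq_mat \<mu> i j else 0))"
    unfolding vec_mat_def by (rule sum.cong) (auto simp: psi_def algebra_simps)
  also have "\<dots> = vec_mat m (psi Y) (freq_mat \<mu>) j + freq_mat \<mu> c j"
    using c by (simp add: sum.distrib vec_mat_def)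
  finally have F: "vec_mat m (psi (c # Y)) (freq_mat \<mu>) j = vec_mat m (psi Y) (freq_mat \<mu>) j + freq_mat \<mu> c j" .
  show ?case by (simp only: morph_Cons psi_append F IH) (simp add: psi_def freq_mat_def)
qed

lemma vec_mat_diff: "vec_mat m (\<lambda>j. u j - v j) A j = vec_mat m u A j - vec_mat m v A j"
  unfolding vec_mat_def by (simp add: left_diff_distrib sum_subtractf)

lemma len_psi: "set X \<subseteq> {1..m} \<Longrightarrow> int (length X) = (\<Sum>j=1..m. psi X j)"
proof -
  assume "set X \<subseteq> {1..m}"
  then have "int (length X) = int (sum (count_list X) {1..m})" using sum_count_set[of X "{1..m}"] by simp
  then show ?thesis by (simp add: psi_def)
qed

lemma Delta_bound:
  assumes "k \<ge> 2" "r \<in> {1..k-1}" "j \<in> {1..m}"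
  shows "\<bar>d r j\<bar> \<le> Delta m k d"
proof -
  let ?v = "\<lambda>j. real_of_int (d r j)"
  have "?v j ^ 2 \<le> (\<Sum>i=1..m. ?v i ^ 2)"
    by (rule member_le_sum) (use assms(3) in auto)
  then have "sqrt (?v j ^ 2) \<le> enorm m ?v" unfolding enorm_def by (rule real_sqrt_le_mono)
  then have 1: "\<bar>?v j\<bar> \<le> enorm m ?v" by simp
  have 2: "enorm m ?v \<le> Max ((\<lambda>i. enorm m (\<lambda>j. real_of_int (d i j))) ` {1..k-1})"
    by (rule Max_ge) (use assms(2) in auto)
  have "real_of_int \<bar>d r j\<bar> \<le> Max ((\<lambda>i. enorm m (\<lambda>j. real_of_int (d i j))) ` {1..k-1})"
    using 1 2 by simp
  then show ?thesis using assms(1) unfolding Delta_def by (simp add: le_floor_iff)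
qed

lemma upt_split: "i \<le> j \<Longrightarrow> j \<le> l \<Longrightarrow> [i..<l] = [i..<j] @ [j..<l]"
  using upt_add_eq_append[of i j "l - j"] by simp

lemma seg_of:
  assumes "map f [i..<i + length (u @ v @ t)] = u @ v @ t"
  shows "map f [i + length u..<i + length u + length v] = v"
proof (rule nth_equalityI)
  fix q assume "q < length (map f [i + length u..<i + length u + length v])"
  then have q: "q < length v" by simp
  have "map f [i..<i + length (u @ v @ t)] ! (length u + q) = (u @ v @ t) ! (length u + q)"
    using assms by simp
  then show "map f [i + length u..<i + length u + length v] ! q = v ! q"
    using q by (simp add: nth_append add.assoc)
qed simp

lemma mono_chain:
  assumes "lo \<le> hi" "\<forall>r. lo \<le> r \<and> r < hi \<longrightarrow> (s::nat\<Rightarrow>nat) r \<le> s (Suc r)"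
  shows "s lo \<le> s hi"
  using assms
proof (induction hi rule: dec_induct)
  case (step n)
  then have "s lo \<le> s n" by simp
  moreover have "s n \<le> s (Suc n)" using step.prems step.hyps by simp
  ultimately show ?case by simp
qed simp

lemma chain:
  assumes "lo \<le> hi" "\<forall>r. lo \<le> r \<and> r < hi \<longrightarrow> s r \<le> e r \<and> e r \<le> s (Suc r)" "s hi \<le> e hi"
  shows "concat (map (\<lambda>r. map f [s r..<e r] @ map f [e r..<s (Suc r)]) [lo..<hi]) @ map f [s hi..<e hi]
         = map f [s lo..<e hi]"
  using assms
proof (induction hi rule: dec_induct)
  case base then show ?case by simp
next
  case (step n)
  have sn: "s n \<le> e n" "e n \<le> s (Suc n)" using step.prems(1) step.hyps by auto
  have IH: "concat (map (\<lambda>r. map f [s r..<e r] @ map f [e r..<s (Suc r)]) [lo..<n]) @ map f [s n..<e n]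
         = map f [s lo..<e n]" using step sn by auto
  have "s lo \<le> s n" using mono_chain[of lo n s] step.hyps step.prems(1) by fastforce
  then have "map f [s lo..<e (Suc n)] = map f [s lo..<e n] @ map f [e n..<s (Suc n)] @ map f [s (Suc n)..<e (Suc n)]"
    using sn step.prems(2) upt_split[of "s lo" "e n" "e (Suc n)"] upt_split[of "e n" "s (Suc n)" "e (Suc n)"] by simp
  then show ?case using IH step.hyps by simp
qed

lemma len_concat_upt: "length (concat (map f [lo..<hi])) = (\<Sum>r\<in>{lo..<hi}. length (f r))"
  by (induction hi) auto

locale fx =
  fixes m :: nat and \<mu> :: "nat \<Rightarrow> nat list" and x :: "nat list"
  assumes m1: "m \<ge> 1"
    and letters: "\<forall>c\<in>{1..m}. set (\<mu> c) \<subseteq> {1..m}"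
    and x_ne: "x \<noteq> []" and mu1: "\<mu> 1 = 1 # x"
    and lens: "\<forall>c\<in>{1..m}. length (\<mu> c) > 1"
begin

lemma uu_set: "set (uu \<mu> n) \<subseteq> {1..m}"
proof (induction n)
  case 0 then show ?case using m1 by (simp add: uu_def)
next
  case (Suc n) then show ?case using letters by (auto simp: uu_Suc set_morph)
qed

lemma uu_len: "length (uu \<mu> n) \<ge> 2 ^ n"
proof (induction n)
  case 0 then show ?case by (simp add: uu_def)
next
  case (Suc n)
  have "length (uu \<mu> (Suc n)) \<ge> 2 * length (uu \<mu> n)"
    unfolding uu_Suc using len_morph[OF lens uu_set] .
  with Suc show ?case by simp
qed

lemma uu_len': "length (uu \<mu> n) > n"
proof -
  have "n < 2 ^ n" by (rule less_exp)
  with uu_len[of n] show ?thesis by linarith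
qed

lemma uu_step: "\<exists>t. uu \<mu> (Suc n) = uu \<mu> n @ t"
proof (induction n)
  case 0 then show ?case using mu1 by (simp add: uu_def morph_def)
next
  case (Suc n)
  then obtain t where "uu \<mu> (Suc n) = uu \<mu> n @ t" by blast
  then have "uu \<mu> (Suc (Suc n)) = uu \<mu> (Suc n) @ morph \<mu> t"
    by (simp add: uu_Suc[of _ "Suc n"] uu_Suc[of _ n])
  then show ?case by blast
qed

lemma uu_mono: "n \<le> n' \<Longrightarrow> \<exists>t. uu \<mu> n' = uu \<mu> n @ t"
proof (induction n' rule: dec_induct)
  case base then show ?case by simp
next
  case (step n')
  then obtain t where "uu \<mu> n' = uu \<mu> n @ t" by blast
  moreover obtain t' where "uu \<mu> (Suc n') = uu \<mu> n' @ t'" using uu_step by blast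
  ultimately show ?case by auto
qed

lemma uu_nth_agree:
  assumes "i < length (uu \<mu> n)" "i < length (uu \<mu> n')"
  shows "uu \<mu> n ! i = uu \<mu> n' ! i"
proof (cases "n \<le> n'")
  case True
  then obtain t where "uu \<mu> n' = uu \<mu> n @ t" using uu_mono by blast
  then show ?thesis using assms by (simp add: nth_append)
next
  case False
  then obtain t where "uu \<mu> n = uu \<mu> n' @ t" using uu_mono[of n' n] by auto
  then show ?thesis using assms by (simp add: nth_append)
qed

definition W :: "nat \<Rightarrow> nat" where "W i = uu \<mu> i ! i"

lemma fixpoint_eq: "fixpoint_word \<mu> = W"
proof -
  have P: "\<forall>n. \<forall>i < length ((morph \<mu> ^^ n) [1]). W i = ((morph \<mu> ^^ n) [1]) ! i"
    using uu_nth_agree uu_len' unfolding W_def uu_def by blast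
  have U: "w = W" if "\<forall>n. \<forall>i < length ((morph \<mu> ^^ n) [1]). w i = ((morph \<mu> ^^ n) [1]) ! i" for w
  proof
    fix i show "w i = W i" using that uu_len'[of i] unfolding W_def uu_def by blast
  qed
  show ?thesis unfolding fixpoint_word_def
    by (rule the_equality) (use P U in blast)+
qed

lemma W_agree: "i < length (uu \<mu> n) \<Longrightarrow> W i = uu \<mu> n ! i"
  unfolding W_def using uu_nth_agree uu_len' by blast

lemma W_set: "W i \<in> {1..m}"
  unfolding W_def using uu_set uu_len'[of i] nth_mem by blast

lemma W_map: "n \<le> length (uu \<mu> t) \<Longrightarrow> map W [0..<n] = take n (uu \<mu> t)"
  by (rule nth_equalityI) (auto simp: W_agree)

definition S :: "nat \<Rightarrow> nat" where "S j = (\<Sum>l<j. length (\<mu> (W l)))"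

lemma S_len: "length (morph \<mu> (map W [0..<j])) = S j"
  by (induction j) (auto simp: S_def morph_def)

lemma S_map: "map W [0..<S j] = morph \<mu> (map W [0..<j])"
proof -
  let ?v = "uu \<mu> j"
  have jl: "j \<le> length ?v" using uu_len'[of j] by simp
  have tj: "take j ?v = map W [0..<j]" using W_map[OF jl] by simp
  have "uu \<mu> (Suc j) = morph \<mu> (take j ?v) @ morph \<mu> (drop j ?v)"
    by (metis append_take_drop_id morph_append uu_Suc)
  then have e: "uu \<mu> (Suc j) = morph \<mu> (map W [0..<j]) @ morph \<mu> (drop j ?v)" using tj by simp
  then have "S j \<le> length (uu \<mu> (Suc j))" using S_len[of j] by simp
  then have "map W [0..<S j] = take (S j) (uu \<mu> (Suc j))" by (rule W_map)
  also have "\<dots> = morph \<mu> (map W [0..<j])" using e S_len[of j] by simp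
  finally show ?thesis .
qed


lemma S_Suc: "S (Suc j) = S j + length (\<mu> (W j))"
  by (simp add: S_def)

lemma blen: "length (\<mu> (W j)) \<ge> 2"
  using lens W_set[of j] by force

lemma S_mono: "j \<le> j' \<Longrightarrow> S j \<le> S j'"
  unfolding S_def by (rule sum_mono2) auto

lemma S_ge: "S (j + t) \<ge> S j + 2 * t"
proof (induction t)
  case (Suc t) then show ?case using S_Suc[of "j+t"] blen[of "j+t"] by simp
qed simp


lemma S_seg: "j \<le> j' \<Longrightarrow> map W [S j..<S j'] = morph \<mu> (map W [j..<j'])"
proof -
  assume jj: "j \<le> j'"
  have a: "map W [0..<S j'] = map W [0..<S j] @ map W [S j..<S j']"
    using upt_split[of 0 "S j" "S j'"] S_mono[OF jj] by simp
  have b: "morph \<mu> (map W [0..<j']) = morph \<mu> (map W [0..<j]) @ morph \<mu> (map W [j..<j'])"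
    using upt_split[of 0 j j'] jj by simp
  from a b S_map[of j] S_map[of j'] show ?thesis by simp
qed

definition blk :: "nat \<Rightarrow> nat" where "blk q = (LEAST j. q < S (Suc j))"

lemma blk_hi: "q < S (Suc (blk q))"
proof -
  have "q < S (Suc q)" using S_ge[of 0 "Suc q"] by (simp add: S_def)
  then show ?thesis unfolding blk_def by (rule LeastI)
qed

lemma blk_lo: "S (blk q) \<le> q"
proof (cases "blk q")
  case 0 then show ?thesis by (simp add: S_def)
next
  case (Suc j)
  then have "\<not> q < S (Suc j)" using not_less_Least[of j "\<lambda>j. q < S (Suc j)"] unfolding blk_def by simp
  with Suc show ?thesis by simp
qed

lemma blk_ge: "S j \<le> q \<Longrightarrow> j \<le> blk q"
proof (rule ccontr)
  assume "S j \<le> q" "\<not> j \<le> blk q"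
  then have "Suc (blk q) \<le> j" by simp
  then have "S (Suc (blk q)) \<le> S j" by (rule S_mono)
  with blk_hi[of q] \<open>S j \<le> q\<close> show False by simp
qed

lemma blk_mono: "q \<le> q' \<Longrightarrow> blk q \<le> blk q'"
  using blk_ge[of "blk q" q'] blk_lo[of q] by simp

lemma S_inj_le: "S j \<le> S j' \<Longrightarrow> j \<le> j'"
proof (rule ccontr)
  assume "S j \<le> S j'" "\<not> j \<le> j'"
  then have "S (j' + (j - j')) \<ge> S j' + 2 * (j - j')" using S_ge by blast
  with \<open>\<not> j \<le> j'\<close> \<open>S j \<le> S j'\<close> show False by simp
qed

lemma main:
  fixes k :: nat and a :: "nat \<Rightarrow> nat list" and d :: "nat \<Rightarrow> nat \<Rightarrow> int" and I :: "nat list"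
  assumes k1: "k \<ge> 1"
    and tmpl: "is_template m k a d"
    and fac: "is_factor I W"
    and inst: "is_instance m k a d I"
    and big: "int (length I) > int (Max ((\<lambda>c. length (\<mu> c)) ` {1..m})) + int k - 1
           + (int k - 1) * (int (Max ((\<lambda>c. length (\<mu> c)) ` {1..m})) - 2 + int m * int k * Delta m k d)"
  shows "\<exists>A D. is_template m k A D \<and> is_parent m \<mu> k A D a d \<and>
           (\<exists>J. is_factor J W \<and> is_instance m k A D J \<and> length J < length I)"
proof -
  define N where "N = Max ((\<lambda>c. length (\<mu> c)) ` {1..m})"
  define L where "L = length I"
  define Dl where "Dl = Delta m k d"
  have NW: "length (\<mu> (W j)) \<le> N" for j
    unfolding N_def by (rule Max_ge) (use W_set[of j] in auto)
  have N2: "N \<ge> 2" using blen[of 0] NW[of 0] by simp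
  obtain i where I_eq: "I = map W [i..<i + L]" using fac unfolding is_factor_def L_def by blast
  obtain X where Xset: "\<forall>r\<in>{1..k}. set (X r) \<subseteq> {1..m}"
    and I_dec: "I = concat (map (\<lambda>r. a r @ X r) [1..<k+1]) @ a (k+1)"
    and Xd: "\<forall>r\<in>{1..k-1}. \<forall>j\<in>{1..m}. psi (X (r+1)) j - psi (X r) j = d r j"
    using inst unfolding is_instance_def by blast
  have alen: "length (a r) \<le> 1" if "r \<in> {1..k+1}" for r
    using tmpl that unfolding is_template_def by blast
  have Dl0: "Dl \<ge> 0"
  proof (cases "k \<ge> 2")
    case True
    have "\<bar>d 1 1\<bar> \<le> Dl" unfolding Dl_def by (rule Delta_bound) (use True m1 in auto)
    then show ?thesis by simp
  next
    case False then show ?thesis by (simp add: Dl_def Delta_def)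
  qed
  have bigL: "int L > int N + int k - 1 + (int k - 1) * (int N - 2 + int m * int k * Dl)"
    using big unfolding N_def L_def Dl_def .
  have LNk: "L \<ge> N + k"
  proof -
    have "(int k - 1) * (int N - 2 + int m * int k * Dl) \<ge> 0"
      using k1 N2 Dl0 by (intro mult_nonneg_nonneg) auto
    then show ?thesis using bigL by linarith
  qed
  define C where "C r = concat (map (\<lambda>l. a l @ X l) [1..<r])" for r
  define p where "p r = i + length (C r)" for r
  have Ldec: "L = (\<Sum>r\<in>{1..<k+1}. length (a r) + length (X r)) + length (a (k+1))"
    unfolding L_def by (subst I_dec) (simp add: len_concat_upt)
  define ell where "ell r = int (length (X r))" for r
  define E where "E = int m * Dl"
  have E0: "E \<ge> 0" using Dl0 unfolding E_def by simp
  have stepb: "\<bar>ell (Suc r) - ell r\<bar> \<le> E" if r: "r \<in> {1..k-1}" for r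
  proof -
    have "ell (Suc r) - ell r = (\<Sum>j=1..m. psi (X (r+1)) j - psi (X r) j)"
    proof -
      have "set (X r) \<subseteq> {1..m}" "set (X (Suc r)) \<subseteq> {1..m}" using Xset r by auto
      then show ?thesis unfolding ell_def using len_psi[of "X r" m] len_psi[of "X (Suc r)" m]
        by (simp add: sum_subtractf)
    qed
    also have "\<dots> = (\<Sum>j=1..m. d r j)" using Xd r by (intro sum.cong) auto
    finally have "\<bar>ell (Suc r) - ell r\<bar> \<le> (\<Sum>j=1..m. \<bar>d r j\<bar>)"
      using sum_abs by (metis)
    also have "\<dots> \<le> (\<Sum>j=1..m. Dl)"
      by (intro sum_mono) (use r in \<open>auto simp: Dl_def intro!: Delta_bound\<close>)
    finally show ?thesis by (simp add: E_def)
  qed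
  have updown: "ell (q+t) \<le> ell q + E * int t \<and> ell q \<le> ell (q+t) + E * int t"
    if "q \<ge> 1" "q + t \<le> k" for q t
    using that
  proof (induction t)
    case 0 then show ?case by simp
  next
    case (Suc t)
    have "\<bar>ell (Suc (q+t)) - ell (q+t)\<bar> \<le> E" using Suc.prems by (intro stepb) auto
    with Suc show ?case by (auto simp: algebra_simps)
  qed
  have allb: "ell r \<le> ell q + E * (int k - 1)" if "q \<in> {1..k}" "r \<in> {1..k}" for q r
  proof (cases "q \<le> r")
    case True
    have "ell (q + (r-q)) \<le> ell q + E * int (r-q)" using updown[of q "r-q"] that True by auto
    moreover have "E * int (r-q) \<le> E * (int k - 1)" using E0 that True by (intro mult_left_mono) auto
    ultimately show ?thesis using True by simp
  next
    case False
    have "ell r \<le> ell (r + (q-r)) + E * int (q-r)" using updown[of r "q-r"] that False by auto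
    moreover have "E * int (q-r) \<le> E * (int k - 1)" using E0 that False by (intro mult_left_mono) auto
    ultimately show ?thesis using False by simp
  qed
  have Xlong: "length (X r) \<ge> N - 1" if r: "r \<in> {1..k}" for r
  proof (rule ccontr)
    assume "\<not> length (X r) \<ge> N - 1"
    then have lr: "ell r \<le> int N - 2" unfolding ell_def using N2 by linarith
    have "int L = (\<Sum>q\<in>{1..<k+1}. int (length (a q)) + ell q) + int (length (a (k+1)))"
      unfolding Ldec ell_def by simp
    also have "\<dots> \<le> (\<Sum>q\<in>{1..<k+1}. 1 + (int N - 2 + E * (int k - 1))) + 1"
    proof -
      have "(\<Sum>q\<in>{1..<k+1}. int (length (a q)) + ell q) \<le> (\<Sum>q\<in>{1..<k+1}. 1 + (int N - 2 + E * (int k - 1)))"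
      proof (rule sum_mono)
        fix q assume q: "q \<in> {1..<k+1}"
        have "int (length (a q)) \<le> 1" using alen[of q] q by auto
        moreover have "ell q \<le> int N - 2 + E * (int k - 1)" using allb[of r q] r q lr by auto
        ultimately show "int (length (a q)) + ell q \<le> 1 + (int N - 2 + E * (int k - 1))" by simp
      qed
      moreover have "int (length (a (k+1))) \<le> 1" using alen[of "k+1"] by auto
      ultimately show ?thesis by simp
    qed
    also have "\<dots> = int k * (1 + (int N - 2 + E * (int k - 1))) + 1" by simp
    also have "\<dots> = int N + int k - 1 + (int k - 1) * (int N - 2 + int m * int k * Dl)"
      unfolding E_def by (simp add: algebra_simps)
    finally show False using bigL by simp
  qed
  have Idec_r: "I = C r @ (a r @ X r) @ concat (map (\<lambda>l. a l @ X l) [Suc r..<k+1]) @ a (k+1)"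
    if "r \<in> {1..k}" for r
  proof -
    have "[1..<k+1] = [1..<r] @ r # [Suc r..<k+1]"
      using that upt_split[of 1 r "k+1"] upt_conv_Cons[of r "k+1"] by auto
    then show ?thesis using I_dec unfolding C_def by simp
  qed
  have Idec_k: "I = C (k+1) @ a (k+1) @ []" using I_dec unfolding C_def by simp
  have IW: "map W [i..<i + length I] = I" using I_eq L_def by simp
  have a_pos: "map W [p r..<p r + length (a r)] = a r" if "r \<in> {1..k+1}" for r
  proof (cases "r = k+1")
    case True
    show ?thesis using seg_of[of W i "C (k+1)" "a (k+1)" "[]"] IW Idec_k True unfolding p_def by simp
  next
    case False
    with that have r: "r \<in> {1..k}" by auto
    show ?thesis using seg_of[of W i "C r" "a r"] IW Idec_r[OF r] unfolding p_def by (metis append.assoc)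
  qed
  have X_pos: "map W [p r + length (a r)..<p (Suc r)] = X r" if r: "r \<in> {1..k}" for r
  proof -
    have CS: "C (Suc r) = C r @ a r @ X r" unfolding C_def using r by simp
    have "I = (C r @ a r) @ X r @ concat (map (\<lambda>l. a l @ X l) [Suc r..<k+1]) @ a (k+1)"
      using Idec_r[OF r] by simp
    then have "map W [i + length (C r @ a r)..<i + length (C r @ a r) + length (X r)] = X r"
      using seg_of[of W i "C r @ a r" "X r"] IW by metis
    then show ?thesis unfolding p_def CS by (simp add: add.assoc)
  qed
  have p_Suc: "p (Suc r) = p r + length (a r) + length (X r)" if "r \<in> {1..k}" for r
    using that unfolding p_def C_def by simp
  have p1: "p 1 = i" unfolding p_def C_def by simp
  have pend: "p (k+1) + length (a (k+1)) = i + L"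
    using Idec_k unfolding p_def L_def by (metis append_Nil2 length_append add.assoc)
  have p_le: "p r + length (a r) + N - 1 \<le> p (Suc r)" if "r \<in> {1..k}" for r
    using p_Suc[OF that] Xlong[OF that] N2 by simp
  define sb where "sb r = blk (p r)" for r
  define eb where "eb r = (if a r = [] \<and> p r = S (sb r) then sb r else Suc (sb r))" for r
  have se: "sb r \<le> eb r" "eb r \<le> Suc (sb r)" for r unfolding eb_def by auto
  have hs: "S (sb r) \<le> p r" for r unfolding sb_def by (rule blk_lo)
  have he: "p r + length (a r) \<le> S (eb r)" if "r \<in> {1..k+1}" for r
  proof (cases "a r = [] \<and> p r = S (sb r)")
    case True then show ?thesis unfolding eb_def by simp
  next
    case False
    have "p r < S (Suc (sb r))" unfolding sb_def by (rule blk_hi)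
    then show ?thesis using False alen[OF that] unfolding eb_def by simp
  qed
  have SN: "S (Suc j) \<le> S j + N" for j using S_Suc[of j] NW[of j] by simp
  have es: "eb r \<le> sb (Suc r)" if r: "r \<in> {1..k}" for r
  proof (cases "a r = [] \<and> p r = S (sb r)")
    case True
    have "p r \<le> p (Suc r)" using p_Suc[OF r] by simp
    then show ?thesis using True unfolding eb_def sb_def by (simp add: blk_mono)
  next
    case False
    have "S (Suc (sb r)) \<le> p (Suc r)"
    proof (cases "a r = []")
      case True
      with False hs[of r] have "S (sb r) + 1 \<le> p r" by simp
      then show ?thesis using SN[of "sb r"] p_le[OF r] True by simp
    next
      case False
      then have "length (a r) = 1" using alen[of r] r by (cases "a r") auto
      then show ?thesis using SN[of "sb r"] p_le[OF r] hs[of r] by simp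
    qed
    then have "Suc (sb r) \<le> sb (Suc r)" unfolding sb_def by (rule blk_ge)
    then show ?thesis using False unfolding eb_def by simp
  qed
  define A where "A r = map W [sb r..<eb r]" for r
  define Y where "Y r = map W [eb r..<sb (Suc r)]" for r
  define a1 where "a1 r = map W [S (sb r)..<p r]" for r
  define a2 where "a2 r = map W [p r + length (a r)..<S (eb r)]" for r
  define D where "D r j = psi (Y (r+1)) j - psi (Y r) j" for r j
  define J where "J = map W [sb 1..<eb (k+1)]"
  have chainc: "\<forall>r. 1 \<le> r \<and> r < k+1 \<longrightarrow> sb r \<le> eb r \<and> eb r \<le> sb (Suc r)"
    using se es by auto
  have Jdec: "J = concat (map (\<lambda>r. A r @ Y r) [1..<k+1]) @ A (k+1)"
    unfolding J_def A_def Y_def using chain[of 1 "k+1" sb eb W] chainc se k1 by simp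
  have s1e: "sb 1 \<le> eb (k+1)"
    using mono_chain[of 1 "k+1" sb] chainc se[of "k+1"] k1 by fastforce
  have muA: "morph \<mu> (A r) = a1 r @ a r @ a2 r" if r: "r \<in> {1..k+1}" for r
  proof -
    have "morph \<mu> (A r) = map W [S (sb r)..<S (eb r)]" unfolding A_def using se by (simp add: S_seg)
    also have "\<dots> = a1 r @ map W [p r..<p r + length (a r)] @ a2 r"
      unfolding a1_def a2_def using hs[of r] he[OF r]
        upt_split[of "S (sb r)" "p r" "S (eb r)"] upt_split[of "p r" "p r + length (a r)" "S (eb r)"]
      by simp
    finally show ?thesis using a_pos[OF r] by simp
  qed
  have Xeq: "X r = a2 r @ morph \<mu> (Y r) @ a1 (Suc r)" if r: "r \<in> {1..k}" for r
  proof -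
    have o1: "p r + length (a r) \<le> S (eb r)" using he[of r] r by simp
    have o2: "S (eb r) \<le> S (sb (Suc r))" using es[OF r] by (rule S_mono)
    have o3: "S (sb (Suc r)) \<le> p (Suc r)" by (rule hs)
    have "X r = map W [p r + length (a r)..<p (Suc r)]" using X_pos[OF r] by simp
    also have "\<dots> = a2 r @ map W [S (eb r)..<S (sb (Suc r))] @ a1 (Suc r)"
      unfolding a1_def a2_def using o1 o2 o3
        upt_split[of "p r + length (a r)" "S (eb r)" "p (Suc r)"] upt_split[of "S (eb r)" "S (sb (Suc r))" "p (Suc r)"]
      by simp
    also have "map W [S (eb r)..<S (sb (Suc r))] = morph \<mu> (Y r)"
      unfolding Y_def using es[OF r] by (rule S_seg)
    finally show ?thesis .
  qed
  have Yset: "set (Y r) \<subseteq> {1..m}" for r unfolding Y_def using W_set by auto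
  have tA: "is_template m k A D"
  proof -
    have "eb r - sb r \<le> 1" for r using se[of r] by linarith
    then show ?thesis unfolding is_template_def A_def using W_set by auto
  qed
  have par: "is_parent m \<mu> k A D a d"
    unfolding is_parent_def
  proof (intro exI conjI ballI)
    fix r assume "r \<in> {1..k+1}" then show "morph \<mu> (A r) = a1 r @ a r @ a2 r" by (rule muA)
  next
    fix r j assume r: "r \<in> {1..k-1}" and j: "j \<in> {1..m}"
    have r1: "r \<in> {1..k}" "Suc r \<in> {1..k}" using r by auto
    have "d r j = psi (X (r+1)) j - psi (X r) j" using Xd r j by auto
    also have "\<dots> = psi (a2 (Suc r) @ a1 (Suc (Suc r))) j - psi (a2 r @ a1 (Suc r)) j
          + (vec_mat m (psi (Y (Suc r))) (freq_mat \<mu>) j - vec_mat m (psi (Y r)) (freq_mat \<mu>) j)"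
      using Xeq[OF r1(1)] Xeq[OF r1(2)] psi_morph[OF Yset, of \<mu> j] psi_morph[OF Yset, of \<mu> j]
      by (simp add: psi_morph[OF Yset])
    also have "vec_mat m (psi (Y (Suc r))) (freq_mat \<mu>) j - vec_mat m (psi (Y r)) (freq_mat \<mu>) j
        = vec_mat m (D r) (freq_mat \<mu>) j"
      unfolding D_def by (simp add: vec_mat_diff)
    finally show "psi (a2 (r + 1) @ a1 (r + 2)) j - psi (a2 r @ a1 (r + 1)) j + vec_mat m (D r) (freq_mat \<mu>) j = d r j"
      by (simp add: numeral_2_eq_2)
  qed
  have Jlen: "0 < length J \<and> length J < L"
  proof -
    have L3: "L \<ge> 3" using LNk N2 k1 by simp
    have s1: "sb 1 = blk i" unfolding sb_def p1 ..
    have hi1: "i < S (Suc (sb 1))" unfolding s1 by (rule blk_hi)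
    have smono: "sb 1 \<le> sb (k+1)"
      using mono_chain[of 1 "k+1" sb] chainc k1 by fastforce
    define D' where "D' = sb (k+1) - sb 1"
    have SD: "S (sb (k+1)) \<ge> i + 1 + 2 * (D' - 1)" if "D' \<ge> 1"
    proof -
      have "S (Suc (sb 1) + (D' - 1)) \<ge> S (Suc (sb 1)) + 2 * (D' - 1)" by (rule S_ge)
      moreover have "Suc (sb 1) + (D' - 1) = sb (k+1)" using that smono unfolding D'_def by simp
      ultimately show ?thesis using hi1 by simp
    qed
    have lenJ: "length J = eb (k+1) - sb 1" unfolding J_def by simp
    show ?thesis
    proof (cases "a (k+1) = [] \<and> p (k+1) = S (sb (k+1))")
      case True
      then have eb: "eb (k+1) = sb (k+1)" unfolding eb_def by simp
      have "S (Suc (sb 1)) \<le> p (k+1)" using SN[of "sb 1"] hs[of 1] p1 pend True LNk by simp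
      then have "Suc (sb 1) \<le> sb (k+1)" unfolding sb_def[of "k+1"] by (rule blk_ge)
      then have D1: "D' \<ge> 1" unfolding D'_def by simp
      have "i + L = S (sb (k+1))" using True pend by simp
      then have "2 * D' \<le> L + 1" using SD[OF D1] D1 by simp
      then show ?thesis using lenJ eb D1 L3 unfolding D'_def by simp
    next
      case False
      then have eb: "eb (k+1) = Suc (sb (k+1))" unfolding eb_def by simp
      have lt: "S (sb (k+1)) + 1 \<le> i + L"
      proof (cases "a (k+1) = []")
        case True
        with False have "p (k+1) \<noteq> S (sb (k+1))" by simp
        with hs[of "k+1"] pend True show ?thesis by simp
      next
        case False
        then have "length (a (k+1)) = 1" using alen[of "k+1"] by (cases "a (k+1)") auto
        with hs[of "k+1"] pend show ?thesis by simp
      qed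
      show ?thesis
      proof (cases "D' = 0")
        case True then show ?thesis using lenJ eb smono L3 unfolding D'_def by simp
      next
        case False
        then have "2 * D' \<le> L" using SD lt by simp
        then show ?thesis using lenJ eb smono L3 unfolding D'_def by simp
      qed
    qed
  qed
  have Jfac: "is_factor J W"
    unfolding is_factor_def J_def by (rule exI[of _ "sb 1"]) (use s1e in simp)
  have Jinst: "is_instance m k A D J"
    unfolding is_instance_def
  proof (intro conjI exI[of _ Y])
    show "J \<noteq> []" using Jlen by auto
  qed (use Yset Jdec in \<open>auto simp: D_def\<close>)
  show ?thesis using tA par Jfac Jinst Jlen unfolding L_def by blast
qed


end

theorem lemma5:
  fixes m k :: nat and \<mu> :: "nat \<Rightarrow> nat list" and x :: "nat list"
    and a :: "nat \<Rightarrow> nat list" and d :: "nat \<Rightarrow> nat \<Rightarrow> int" and I :: "nat list"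
  assumes "m \<ge> 1"
    and "\<forall>c\<in>{1..m}. set (\<mu> c) \<subseteq> {1..m}"
    and "set x \<subseteq> {1..m}" and "x \<noteq> []" and "\<mu> 1 = 1 # x"
    and "\<forall>c\<in>{1..m}. length (\<mu> c) > 1"
    and "\<exists>Minv. is_inverse m (\<lambda>i j. real_of_int (freq_mat \<mu> i j)) Minv \<and> opnorm m Minv < 1"
    and "k \<ge> 1"
    and "is_template m k a d"
    and "is_factor I (fixpoint_word \<mu>)"
    and "is_instance m k a d I"
    and "int (length I) > int (Max ((\<lambda>c. length (\<mu> c)) ` {1..m})) + int k - 1
           + (int k - 1) * (int (Max ((\<lambda>c. length (\<mu> c)) ` {1..m})) - 2 + int m * int k * Delta m k d)"
  shows "\<exists>A D. is_template m k A D \<and> is_parent m \<mu> k A D a d \<and>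
           (\<exists>J. is_factor J (fixpoint_word \<mu>) \<and> is_instance m k A D J \<and> length J < length I)"
proof -
  interpret fx m \<mu> x
    by unfold_locales (use assms(1-6) in auto)
  show ?thesis using main[OF assms(8,9) _ assms(11)] assms(10,12) unfolding fixpoint_eq by blast
qed

end
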